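(* Let $n\ge p$, $\nu>0$, $\Psi\in\mathbb R^{n\times p}$, and define for $M\in\mathcal V_{n,p}$, $V\in\mathcal V_{p,p}$, $\boldsymbol d\in\mathbb R_+^p$ (with $D=\mathrm{diag}(\boldsymbol d)$) $$g(M,\boldsymbol d,V;\nu,\Psi)=\frac{\mathrm{etr}(\nu VDM^T\Psi)}{\left[{}_0F_1\!\left(\tfrac n2,\tfrac{D^2}{4}\right)\right]^\nu}.$$ (a) If $\|\Psi\|_2<1$, then $\int_{\mathcal V_{n,p}}\int_{\mathcal V_{p,p}}\int_{\mathbb R_+^p} g(M,\boldsymbol d,V;\nu,\Psi)\,d\boldsymbol d\,d\mu(V)\,d\mu(M)<\infty$. (b) If $\|\Psi\|_2>1$, then this integral equals $+\infty$.
   Context: $\mathcal V_{n,p}=\{X\in\mathbb R^{n\times p}:X^TX=I_p\}$; $\mu$ denotes the normalized Haar probability measure on $\mathcal V_{n,p}$ (resp. on $\mathcal V_{p,p}=O(p)$); $d\boldsymbol d$ is Lebesgue measure on $\mathbb R_+^p=(0,\infty)^p$. $\|\cdot\|_2$ is the spectral norm, $\mathrm{etr}(A)=\exp(\mathrm{tr}A)$. For diagonal $D$ with diagonal $\boldsymbol d$, ${}_0F_1\!\left(\tfrac n2,\tfrac{D^2}{4}\right)=\int_{\mathcal V_{n,p}}\exp\big(\sum_j d_jX_{jj}\big)[dX]$. *)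

theory Defs
  imports "HOL-Analysis.Analysis" "HOL-Probability.Probability"
begin

text \<open>Stiefel manifold V_{n,p} of n x p matrices with orthonormal columns
  (rows indexed by 'n, columns by 'p). For 'n = 'p this is O(p).\<close>
definition stiefel :: "(real^'p^'n) set" where
  "stiefel = {X. transpose X ** X = mat 1}"

definition haar_stiefel :: "(real^'p^'n) measure \<Rightarrow> bool" where
  "haar_stiefel \<mu> \<longleftrightarrow>
     sets \<mu> = sets borel \<and> prob_space \<mu> \<and> emeasure \<mu> stiefel = 1 \<and>
     (\<forall>Q::real^'n^'n. Q \<in> stiefel \<longrightarrow> distr \<mu> \<mu> (\<lambda>X. Q ** X) = \<mu>)"

definition diagm :: "real^'p \<Rightarrow> real^'p^'p" where
  "diagm d = (\<chi> i j. if i = j then d $ i else 0)"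

text \<open>0F1(n/2, D^2/4) = integral over V_{n,p} of exp(sum_j d_j X_{jj}).
  The "diagonal" entries X_{jj} are taken along an injection e of column indices
  into row indices (e j = j in the paper's convention).\<close>
definition hyp0F1 :: "(real^'p^'n) measure \<Rightarrow> ('p \<Rightarrow> 'n) \<Rightarrow> real^'p \<Rightarrow> real" where
  "hyp0F1 \<mu> e d = (\<integral>X. exp (\<Sum>j\<in>UNIV. d $ j * X $ e j $ j) \<partial>\<mu>)"

definition gdens :: "(real^'p^'n) measure \<Rightarrow> ('p \<Rightarrow> 'n) \<Rightarrow> real \<Rightarrow> real^'p^'n
     \<Rightarrow> real^'p^'n \<Rightarrow> real^'p \<Rightarrow> real^'p^'p \<Rightarrow> real" where
  "gdens \<mu> e \<nu> \<Psi> M d V =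
     exp (\<nu> * trace (V ** diagm d ** transpose M ** \<Psi>)) / (hyp0F1 \<mu> e d powr \<nu>)"

definition pos_orthant :: "(real^'p) set" where
  "pos_orthant = {d. \<forall>i. 0 < d $ i}"

end

theory Submission
  imports Defs "HOL-Probability.Distributions"
begin


lemma stiefel_iff: "X \<in> stiefel \<longleftrightarrow> (\<forall>i j. column i X \<bullet> column j X = (if i = j then 1 else 0))"
  unfolding stiefel_def matrix_mult_transpose_dot_column by (auto simp: vec_eq_iff mat_def)

lemma stiefel_col_norm: "X \<in> stiefel \<Longrightarrow> norm (column j X) = 1"
  by (simp add: stiefel_iff norm_eq_1)

lemma stiefel_entry: "X \<in> stiefel \<Longrightarrow> \<bar>X $ i $ j\<bar> \<le> 1"
proof -
  assume "X \<in> stiefel"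
  have "\<bar>column j X $ i\<bar> \<le> norm (column j X)" by (rule component_le_norm_cart)
  thus ?thesis using stiefel_col_norm[OF \<open>X \<in> stiefel\<close>] by (simp add: column_def)
qed

lemma householder:
  fixes a b :: "real^'n"
  assumes "norm a = 1" "norm b = 1"
  obtains h where "orthogonal_transformation h" "h a = b"
     "\<And>x. (a - b) \<bullet> x = 0 \<Longrightarrow> h x = x"
proof (cases "a = b")
  case True
  then show ?thesis using that[of "\<lambda>x. x"] by auto
next
  case False
  define w where "w = a - b"
  have ww: "w \<bullet> w \<noteq> 0" using False by (simp add: w_def)
  define h where "h x = x - (2 * (w \<bullet> x) / (w \<bullet> w)) *\<^sub>R w" for x
  have lin: "linear h" unfolding h_def
    by (auto simp: linear_iff inner_add_right inner_scaleR_right add_divide_distrib algebra_simps scaleR_add_left)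
  have ot: "orthogonal_transformation h"
    unfolding orthogonal_transformation_def
  proof (intro conjI allI lin)
    fix v u
    show "h v \<bullet> h u = v \<bullet> u" using ww
      unfolding h_def by (simp add: inner_diff_left inner_diff_right inner_commute field_simps power2_eq_square)
  qed
  have aa: "a \<bullet> a = 1" "b \<bullet> b = 1" using assms by (simp_all add: norm_eq_1)
  have "h a = b" using ww aa unfolding h_def w_def
    by (simp add: inner_diff_left inner_diff_right inner_commute field_simps)
  then show ?thesis using that[OF ot] by (auto simp: h_def w_def)
qed

lemma frame_trans_aux:
  fixes X Y :: "real^'p^'n"
  assumes X: "X \<in> stiefel" and Y: "Y \<in> stiefel" and "finite J"
  shows "\<exists>f. orthogonal_transformation f \<and> (\<forall>j\<in>J. f (column j Y) = column j X)"
  using \<open>finite J\<close>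
proof (induction J rule: finite_induct)
  case empty
  then show ?case by (intro exI[of _ "\<lambda>x. x"]) auto
next
  case (insert j' J)
  then obtain f where f: "orthogonal_transformation f" "\<forall>j\<in>J. f (column j Y) = column j X" by blast
  have na: "norm (f (column j' Y)) = 1" using f(1) stiefel_col_norm[OF Y]
    by (simp add: orthogonal_transformation)
  obtain h where h: "orthogonal_transformation h" "h (f (column j' Y)) = column j' X"
     "\<And>x. (f (column j' Y) - column j' X) \<bullet> x = 0 \<Longrightarrow> h x = x"
    using householder[OF na stiefel_col_norm[OF X]] by blast
  have "h (f (column j Y)) = column j X" if "j \<in> J" for j
  proof -
    have jj: "j \<noteq> j'" using that insert by auto
    have "f (column j' Y) \<bullet> column j X = 0"
      using f that jj Y by (metis orthogonal_transformation_def stiefel_iff)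
    moreover have "column j' X \<bullet> column j X = 0" using X jj by (simp add: stiefel_iff)
    ultimately have "(f (column j' Y) - column j' X) \<bullet> column j X = 0" by (simp add: inner_diff_left)
    then show ?thesis using h(3) f(2) that by simp
  qed
  moreover have "orthogonal_transformation (\<lambda>x. h (f x))"
    using orthogonal_transformation_compose[OF h(1) f(1)] by (simp add: o_def)
  ultimately show ?case using h f by (intro exI[of _ "\<lambda>x. h (f x)"] conjI) auto
qed

lemma column_mult: "column j (Q ** Y) = Q *v column j Y"
  by (simp add: column_def matrix_matrix_mult_def matrix_vector_mult_def vec_eq_iff)

lemma frame_trans:
  fixes X Y :: "real^'p^'n"
  assumes X: "X \<in> stiefel" and Y: "Y \<in> stiefel"
  obtains Q :: "real^'n^'n" where "Q \<in> stiefel" "Q ** Y = X"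
proof -
  obtain f where f: "orthogonal_transformation f" "\<forall>j. f (column j Y) = column j X"
    using frame_trans_aux[OF X Y, of UNIV] by auto
  have lf: "linear f" and om: "orthogonal_matrix (matrix f)" using f(1) orthogonal_transformation_matrix by auto
  have "matrix f ** Y = X"
  proof -
    have "column j (matrix f ** Y) = column j X" for j
      using f(2) matrix_works[of f] lf by (simp add: column_mult linear_def scalar_mult_eq_scaleR)
    thus ?thesis by (simp add: vec_eq_iff column_def)
  qed
  moreover have "matrix f \<in> stiefel" using om by (simp add: stiefel_def orthogonal_matrix_def)
  ultimately show ?thesis using that by blast
qed

lemma stiefel_mult: "Q \<in> stiefel \<Longrightarrow> X \<in> stiefel \<Longrightarrow> Q ** X \<in> stiefel"
  unfolding stiefel_def by (simp add: matrix_transpose_mul matrix_mul_assoc)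
     (metis matrix_mul_assoc matrix_mul_lid)


lemma cont_mm: "continuous_on UNIV (\<lambda>X::real^'p^'n. Q ** X)"
  unfolding matrix_matrix_mult_def by (intro continuous_intros)

lemma closed_stiefel: "closed (stiefel :: (real^'p^'n) set)"
proof -
  have "continuous_on UNIV (\<lambda>X::real^'p^'n. transpose X ** X)"
    unfolding matrix_matrix_mult_def transpose_def by (intro continuous_intros)
  then show ?thesis unfolding stiefel_def by (intro closed_Collect_eq continuous_intros) auto
qed

lemma bounded_stiefel: "bounded (stiefel :: (real^'p^'n) set)"
proof -
  have "norm X \<le> real CARD('n) * real CARD('p)" if "X \<in> stiefel" for X :: "real^'p^'n"
  proof -
    have "norm (X $ i) \<le> real CARD('p)" for i
    proof -
      have "norm (X $ i) \<le> (\<Sum>j\<in>UNIV. \<bar>X $ i $ j\<bar>)" by (rule norm_le_l1_cart)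
      also have "\<dots> \<le> (\<Sum>j\<in>(UNIV::'p set). 1)" by (intro sum_mono stiefel_entry that)
      finally show ?thesis by simp
    qed
    then have "(\<Sum>i\<in>UNIV. norm (X $ i)) \<le> (\<Sum>i\<in>(UNIV::'n set). real CARD('p))" by (intro sum_mono)
    moreover have "norm X \<le> (\<Sum>i\<in>UNIV. norm (X $ i))" unfolding norm_vec_def by (rule L2_set_le_sum) simp
    ultimately show ?thesis by simp
  qed
  then show ?thesis unfolding bounded_iff by blast
qed

lemma compact_stiefel: "compact (stiefel :: (real^'p^'n) set)"
  using closed_stiefel bounded_stiefel by (simp add: compact_eq_bounded_closed)

lemma haar_basic:
  fixes \<mu> :: "(real^'p^'n) measure"
  assumes "haar_stiefel \<mu>"
  shows "prob_space \<mu>" "sets \<mu> = sets borel" "space \<mu> = UNIV" "stiefel \<in> sets \<mu>"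
    "AE X in \<mu>. X \<in> stiefel" "emeasure \<mu> stiefel = 1"
proof -
  show p: "prob_space \<mu>" and s: "sets \<mu> = sets borel" and e1: "emeasure \<mu> stiefel = 1"
    using assms by (auto simp: haar_stiefel_def)
  show sp: "space \<mu> = UNIV" using sets_eq_imp_space_eq[OF s] by simp
  have "(stiefel :: (real^'p^'n) set) \<in> sets borel" using closed_stiefel by (rule borel_closed)
  then show st: "stiefel \<in> sets \<mu>" using s by simp
  have "emeasure \<mu> (space \<mu> - stiefel) = emeasure \<mu> (space \<mu>) - emeasure \<mu> stiefel"
    using st e1 by (intro emeasure_compl) auto
  also have "\<dots> = 0" using e1 prob_space.emeasure_space_1[OF p] by simp
  finally have z: "emeasure \<mu> (UNIV - stiefel) = 0" using sp by simp
  have u: "UNIV - stiefel \<in> sets \<mu>" using sets.compl_sets[OF st] sp by simp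
  have sub: "{x \<in> space \<mu>. \<not> x \<in> stiefel} \<subseteq> UNIV - stiefel" by blast
  show "AE X in \<mu>. X \<in> stiefel" by (rule AE_I[OF sub z u])
qed

lemma haar_open_sets:
  assumes "haar_stiefel \<mu>" "open U" shows "U \<in> sets \<mu>"
proof -
  have "U \<in> sets borel" using assms(2) by (rule borel_open)
  then show ?thesis using haar_basic(2)[OF assms(1)] by simp
qed

lemma haar_invariant:
  fixes \<mu> :: "(real^'p^'n) measure"
  assumes h: "haar_stiefel \<mu>" and Q: "Q \<in> stiefel" and B: "B \<in> sets \<mu>"
  shows "emeasure \<mu> ((\<lambda>X. Q ** X) -` B) = emeasure \<mu> B"
proof -
  have d: "distr \<mu> \<mu> (\<lambda>X. Q ** X) = \<mu>" using h Q by (auto simp: haar_stiefel_def)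
  have m: "(\<lambda>X. Q ** X) \<in> measurable \<mu> \<mu>"
    using borel_measurable_continuous_onI[OF cont_mm[of Q]]
      measurable_cong_sets[OF haar_basic(2)[OF h] haar_basic(2)[OF h]] by blast
  have "emeasure \<mu> B = emeasure (distr \<mu> \<mu> (\<lambda>X. Q ** X)) B" using d by simp
  also have "\<dots> = emeasure \<mu> ((\<lambda>X. Q ** X) -` B \<inter> space \<mu>)" using m B by (rule emeasure_distr)
  finally show ?thesis using haar_basic(3)[OF h] by simp
qed

lemma haar_support:
  fixes \<mu> :: "(real^'p^'n) measure"
  assumes h: "haar_stiefel \<mu>" and X0: "X0 \<in> stiefel" and U: "open U" "X0 \<in> U"
  shows "0 < emeasure \<mu> U"
proof (rule ccontr)
  assume "\<not> 0 < emeasure \<mu> U"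
  then have z: "emeasure \<mu> U = 0" by simp
  define Qf where "Qf Y = (SOME Q. Q \<in> stiefel \<and> Q ** Y = X0)" for Y :: "real^'p^'n"
  have Qf: "Qf Y \<in> stiefel \<and> Qf Y ** Y = X0" if "Y \<in> stiefel" for Y
    unfolding Qf_def by (rule someI_ex) (use frame_trans[OF X0 that] in blast)
  define C where "C Y = (\<lambda>X. Qf Y ** X) -` U" for Y
  have oC: "open (C Y)" for Y
    unfolding C_def using cont_mm[of "Qf Y"] U(1) by (simp add: continuous_on_open_vimage) blast
  have cov: "stiefel \<subseteq> (\<Union>Y\<in>stiefel. C Y)"
    using Qf U(2) by (auto simp: C_def)
  obtain K where K: "finite K" "K \<subseteq> stiefel" "stiefel \<subseteq> (\<Union>Y\<in>K. C Y)"
    by (rule compactE_image[OF compact_stiefel, of stiefel C]) (use oC cov in auto)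
  have sC: "C Y \<in> sets \<mu>" for Y using haar_open_sets[OF h oC] .
  have C0: "emeasure \<mu> (C Y) = 0" if "Y \<in> K" for Y
  proof -
    have "Qf Y \<in> stiefel" using Qf[of Y] that K(2) by blast
    then have "emeasure \<mu> (C Y) = emeasure \<mu> U"
      unfolding C_def by (rule haar_invariant[OF h _ haar_open_sets[OF h U(1)]])
    then show ?thesis using z by simp
  qed
  have "open (\<Union>Y\<in>K. C Y)" using oC by (simp add: open_UN)
  then have "emeasure \<mu> stiefel \<le> emeasure \<mu> (\<Union>Y\<in>K. C Y)"
    using K(3) by (intro emeasure_mono haar_open_sets[OF h])
  also have "\<dots> \<le> (\<Sum>Y\<in>K. emeasure \<mu> (C Y))"
    by (rule emeasure_subadditive_finite[OF K(1)]) (use sC in blast)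
  also have "\<dots> = 0" using C0 by (simp add: sum.neutral)
  finally have "emeasure \<mu> stiefel \<le> 0" .
  then show False using haar_basic(6)[OF h] by auto
qed



definition hf :: "('p \<Rightarrow> 'n) \<Rightarrow> real^'p \<Rightarrow> real^'p^'n \<Rightarrow> real" where
  "hf e d X = exp (\<Sum>j\<in>UNIV. d $ j * X $ e j $ j)"

lemma hyp_hf: "hyp0F1 \<mu> e d = (\<integral>X. hf e d X \<partial>\<mu>)"
  by (simp add: hyp0F1_def hf_def)

lemma hf_meas:
  fixes \<mu> :: "(real^'p^'n) measure"
  assumes h: "haar_stiefel \<mu>"
  shows "hf e d \<in> borel_measurable \<mu>"
proof -
  have "continuous_on UNIV (hf e d)" unfolding hf_def by (intro continuous_intros)
  then have "hf e d \<in> borel_measurable borel" by (rule borel_measurable_continuous_onI)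
  then show ?thesis using measurable_cong_sets[OF haar_basic(2)[OF h] refl] by blast
qed

lemma sum_entry_bound:
  assumes "X \<in> stiefel"
  shows "\<bar>\<Sum>j\<in>UNIV. d $ j * X $ e j $ j\<bar> \<le> (\<Sum>j\<in>UNIV. \<bar>d $ j\<bar>)"
proof -
  have "\<bar>\<Sum>j\<in>UNIV. d $ j * X $ e j $ j\<bar> \<le> (\<Sum>j\<in>UNIV. \<bar>d $ j * X $ e j $ j\<bar>)" by (rule sum_abs)
  also have "\<dots> \<le> (\<Sum>j\<in>UNIV. \<bar>d $ j\<bar>)"
  proof (intro sum_mono)
    fix j
    have "\<bar>X $ e j $ j\<bar> \<le> 1" by (rule stiefel_entry[OF assms])
    then show "\<bar>d $ j * X $ e j $ j\<bar> \<le> \<bar>d $ j\<bar>"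
      by (simp add: abs_mult mult_left_le)
  qed
  finally show ?thesis .
qed

lemma hf_integrable:
  fixes \<mu> :: "(real^'p^'n) measure"
  assumes h: "haar_stiefel \<mu>"
  shows "integrable \<mu> (hf e d)"
proof -
  interpret p: prob_space \<mu> by (rule haar_basic(1)[OF h])
  show ?thesis
  proof (rule Bochner_Integration.integrable_bound[OF p.integrable_const[of "exp (\<Sum>j\<in>UNIV. \<bar>d $ j\<bar>)"] hf_meas[OF h]])
    show "AE x in \<mu>. norm (hf e d x) \<le> norm (exp (\<Sum>j\<in>UNIV. \<bar>d $ j\<bar>))"
      using haar_basic(5)[OF h]
    proof (rule eventually_mono)
      fix X :: "real^'p^'n" assume "X \<in> stiefel"
      from sum_entry_bound[OF this, of d e] show "norm (hf e d X) \<le> norm (exp (\<Sum>j\<in>UNIV. \<bar>d $ j\<bar>))"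
        by (simp add: hf_def)
    qed
  qed
qed

lemma hyp_le:
  fixes \<mu> :: "(real^'p^'n) measure"
  assumes h: "haar_stiefel \<mu>" and d: "\<forall>j. 0 \<le> d $ j"
  shows "hyp0F1 \<mu> e d \<le> exp (\<Sum>j\<in>UNIV. d $ j)"
proof -
  interpret p: prob_space \<mu> by (rule haar_basic(1)[OF h])
  have "(\<integral>X. hf e d X \<partial>\<mu>) \<le> (\<integral>X. exp (\<Sum>j\<in>UNIV. d $ j) \<partial>\<mu>)"
  proof (rule integral_mono_AE[OF hf_integrable[OF h] p.integrable_const])
    show "AE x in \<mu>. hf e d x \<le> exp (\<Sum>j\<in>UNIV. d $ j)"
      using haar_basic(5)[OF h]
    proof (rule eventually_mono)
      fix X :: "real^'p^'n" assume X: "X \<in> stiefel"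
      have "(\<Sum>j\<in>UNIV. d $ j * X $ e j $ j) \<le> (\<Sum>j\<in>UNIV. d $ j)"
      proof (intro sum_mono)
        fix j
        have "X $ e j $ j \<le> 1" using stiefel_entry[OF X, of "e j" j] by simp
        then show "d $ j * X $ e j $ j \<le> d $ j" using d by (simp add: mult_left_le)
      qed
      then show "hf e d X \<le> exp (\<Sum>j\<in>UNIV. d $ j)" by (simp add: hf_def)
    qed
  qed
  also have "\<dots> = exp (\<Sum>j\<in>UNIV. d $ j)" by (simp add: p.prob_space)
  finally show ?thesis by (simp add: hyp_hf)
qed

lemma hyp_pos:
  fixes \<mu> :: "(real^'p^'n) measure"
  assumes h: "haar_stiefel \<mu>"
  shows "0 < hyp0F1 \<mu> e d"
proof -
  interpret p: prob_space \<mu> by (rule haar_basic(1)[OF h])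
  have "(\<integral>X. exp (- (\<Sum>j\<in>UNIV. \<bar>d $ j\<bar>)) \<partial>\<mu>) \<le> (\<integral>X. hf e d X \<partial>\<mu>)"
  proof (rule integral_mono_AE[OF p.integrable_const hf_integrable[OF h]])
    show "AE x in \<mu>. exp (- (\<Sum>j\<in>UNIV. \<bar>d $ j\<bar>)) \<le> hf e d x"
      using haar_basic(5)[OF h]
    proof (rule eventually_mono)
      fix X :: "real^'p^'n" assume X: "X \<in> stiefel"
      from sum_entry_bound[OF X, of d e] show "exp (- (\<Sum>j\<in>UNIV. \<bar>d $ j\<bar>)) \<le> hf e d X"
        by (simp add: hf_def)
    qed
  qed
  moreover have "(\<integral>X. exp (- (\<Sum>j\<in>UNIV. \<bar>d $ j\<bar>)) \<partial>\<mu>) > 0" by (simp add: p.prob_space)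
  ultimately show ?thesis by (simp add: hyp_hf)
qed

definition Ueps :: "('p \<Rightarrow> 'n) \<Rightarrow> real \<Rightarrow> (real^'p^'n) set" where
  "Ueps e \<epsilon> = {X. \<forall>j. 1 - \<epsilon> < X $ e j $ j}"

lemma open_Ueps:
  fixes e :: "'p::finite \<Rightarrow> 'n::finite" shows "open (Ueps e \<epsilon>)"
proof -
  have "open {X::real^'p^'n. 1 - \<epsilon> < X $ e j $ j}" for j
    by (intro open_Collect_less continuous_on_component continuous_on_id continuous_on_const)
  then show ?thesis unfolding Ueps_def Collect_all_eq by (intro open_INT) auto
qed

lemma hyp_ge:
  fixes \<mu> :: "(real^'p^'n) measure"
  assumes h: "haar_stiefel \<mu>" and d: "\<forall>j. 0 \<le> d $ j"
  shows "exp ((1 - \<epsilon>) * (\<Sum>j\<in>UNIV. d $ j)) * measure \<mu> (Ueps e \<epsilon>) \<le> hyp0F1 \<mu> e d"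
proof -
  interpret p: prob_space \<mu> by (rule haar_basic(1)[OF h])
  have US: "Ueps e \<epsilon> \<in> sets \<mu>" by (rule haar_open_sets[OF h open_Ueps])
  have "(\<integral>X. exp ((1 - \<epsilon>) * (\<Sum>j\<in>UNIV. d $ j)) * indicator (Ueps e \<epsilon>) X \<partial>\<mu>) \<le> (\<integral>X. hf e d X \<partial>\<mu>)"
  proof (rule integral_mono[OF integrable_real_mult_indicator[OF US p.integrable_const] hf_integrable[OF h]])
    fix X :: "real^'p^'n"
    show "exp ((1 - \<epsilon>) * (\<Sum>j\<in>UNIV. d $ j)) * indicator (Ueps e \<epsilon>) X \<le> hf e d X"
    proof (cases "X \<in> Ueps e \<epsilon>")
      case True
      have "(1 - \<epsilon>) * (\<Sum>j\<in>UNIV. d $ j) \<le> (\<Sum>j\<in>UNIV. d $ j * X $ e j $ j)"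
        unfolding sum_distrib_left
      proof (intro sum_mono)
        fix j
        have "1 - \<epsilon> \<le> X $ e j $ j" using True by (auto simp: Ueps_def less_imp_le)
        then show "(1 - \<epsilon>) * d $ j \<le> d $ j * X $ e j $ j" using d
          by (simp add: mult.commute mult_left_mono)
      qed
      then show ?thesis using True by (simp add: hf_def)
    next
      case False
      then show ?thesis by (simp add: hf_def)
    qed
  qed
  then show ?thesis using US by (simp add: hyp_hf mult.commute)
qed

definition Emat :: "('p \<Rightarrow> 'n) \<Rightarrow> real^'p^'n" where
  "Emat e = (\<chi> i j. if i = e j then 1 else 0)"

lemma column_Emat: "column j (Emat e) = axis (e j) 1"
  by (simp add: Emat_def column_def axis_def vec_eq_iff)

lemma Emat_stiefel: "inj e \<Longrightarrow> Emat e \<in> stiefel"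
  unfolding stiefel_iff column_Emat inner_axis_axis by (simp add: inj_eq)

lemma measure_Ueps_pos:
  fixes \<mu> :: "(real^'p^'n) measure"
  assumes h: "haar_stiefel \<mu>" and e: "inj e" and eps: "0 < \<epsilon>"
  shows "0 < measure \<mu> (Ueps e \<epsilon>)"
proof -
  interpret p: prob_space \<mu> by (rule haar_basic(1)[OF h])
  have "Emat e \<in> Ueps e \<epsilon>" using eps by (simp add: Ueps_def Emat_def)
  then have "0 < emeasure \<mu> (Ueps e \<epsilon>)"
    by (intro haar_support[OF h Emat_stiefel[OF e] open_Ueps])
  then show ?thesis by (simp add: p.emeasure_eq_measure)
qed



definition acoef :: "real^'p^'n \<Rightarrow> real^'p^'n \<Rightarrow> real^'p^'p \<Rightarrow> 'p \<Rightarrow> real" where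
  "acoef \<Psi> M V j = column j M \<bullet> (\<Psi> *v column j V)"

lemma trace_formula:
  fixes \<Psi> M :: "real^'p^'n" and V :: "real^'p^'p"
  shows "trace (V ** diagm d ** transpose M ** \<Psi>) = (\<Sum>j\<in>UNIV. d $ j * acoef \<Psi> M V j)"
proof -
  have e1: "V ** diagm d ** transpose M ** \<Psi> = (V ** diagm d) ** (transpose M ** \<Psi>)"
    by (simp add: matrix_mul_assoc)
  have e2: "(transpose M ** \<Psi>) ** (V ** diagm d) = ((transpose M ** \<Psi>) ** V) ** diagm d"
    by (simp add: matrix_mul_assoc)
  have tD: "trace (A ** diagm d) = (\<Sum>j\<in>UNIV. A $ j $ j * d $ j)" for A :: "real^'p^'p"
    unfolding trace_def matrix_matrix_mult_def diagm_def
    by (simp add: if_distrib if_distribR cong: if_cong)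
  have ent: "((transpose M ** \<Psi>) ** V) $ j $ j = acoef \<Psi> M V j" for j
  proof -
    have "((transpose M ** \<Psi>) ** V) $ j $ j = (\<Sum>k\<in>UNIV. \<Sum>l\<in>UNIV. M $ l $ j * \<Psi> $ l $ k * V $ k $ j)"
      unfolding matrix_matrix_mult_def transpose_def by (simp add: sum_distrib_right)
    also have "\<dots> = (\<Sum>l\<in>UNIV. \<Sum>k\<in>UNIV. M $ l $ j * \<Psi> $ l $ k * V $ k $ j)"
      by (rule sum.swap)
    also have "\<dots> = acoef \<Psi> M V j"
      unfolding acoef_def column_def inner_vec_def matrix_vector_mult_def
      by (simp add: sum_distrib_left mult.assoc)
    finally show ?thesis .
  qed
  show ?thesis
    unfolding e1 trace_mul_sym[of "V ** diagm d"] e2 tD ent by (simp add: mult.commute)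
qed

lemma acoef_bound:
  assumes "M \<in> stiefel" "V \<in> stiefel"
  shows "\<bar>acoef \<Psi> M V j\<bar> \<le> onorm (\<lambda>x. \<Psi> *v x)"
proof -
  have "\<bar>acoef \<Psi> M V j\<bar> \<le> norm (column j M) * norm (\<Psi> *v column j V)"
    unfolding acoef_def by (rule Cauchy_Schwarz_ineq2)
  also have "\<dots> = norm (\<Psi> *v column j V)" using stiefel_col_norm[OF assms(1)] by simp
  also have "\<dots> \<le> onorm (\<lambda>x. \<Psi> *v x) * norm (column j V)"
    by (rule onorm) simp
  also have "\<dots> = onorm (\<lambda>x. \<Psi> *v x)" using stiefel_col_norm[OF assms(2)] by simp
  finally show ?thesis .
qed



lemma prod_basis_cart:
  fixes g :: "real \<Rightarrow> 'b::comm_monoid_mult" and x :: "real^'p"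
  shows "(\<Prod>b\<in>Basis. g (x \<bullet> b)) = (\<Prod>j\<in>UNIV. g (x $ j))"
  by (simp add: Basis_vec_def cart_eq_inner_axis axis_eq_axis prod.UNION_disjoint)

lemma exp_int_finite:
  fixes C \<kappa> :: real
  assumes C: "0 \<le> C" and k: "0 < \<kappa>"
  shows "(\<integral>\<^sup>+ d. ennreal (C * indicator pos_orthant d * exp (- \<kappa> * (\<Sum>j\<in>UNIV. d $ j))) \<partial>(lborel :: (real^'p) measure)) < \<infinity>"
proof -
  define c where "c = C / \<kappa> ^ CARD('p)"
  have c0: "0 \<le> c" using C k by (simp add: c_def)
  have pw: "ennreal (C * indicator pos_orthant d * exp (- \<kappa> * (\<Sum>j\<in>UNIV. d $ j)))
      \<le> ennreal c * (\<Prod>b\<in>Basis. ennreal (exponential_density \<kappa> (d \<bullet> b)))" for d :: "real^'p"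
  proof (cases "d \<in> pos_orthant")
    case True
    then have pos: "0 < d $ j" for j by (auto simp: pos_orthant_def)
    have "(\<Prod>b\<in>Basis. ennreal (exponential_density \<kappa> (d \<bullet> b))) =
          (\<Prod>j\<in>UNIV. ennreal (exponential_density \<kappa> (d $ j)))"
      by (rule prod_basis_cart)
    also have "\<dots> = (\<Prod>j\<in>UNIV. ennreal (\<kappa> * exp (- \<kappa> * d $ j)))"
    proof (intro prod.cong refl)
      fix j
      show "ennreal (exponential_density \<kappa> (d $ j)) = ennreal (\<kappa> * exp (- \<kappa> * d $ j))"
        using pos[of j] by (simp add: exponential_density_def mult.commute)
    qed
    also have "\<dots> = ennreal (\<Prod>j\<in>UNIV. \<kappa> * exp (- \<kappa> * d $ j))"
      using k by (simp add: prod_ennreal less_imp_le)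
    also have "(\<Prod>j\<in>UNIV. \<kappa> * exp (- \<kappa> * d $ j)) = \<kappa> ^ CARD('p) * exp (- \<kappa> * (\<Sum>j\<in>UNIV. d $ j))"
      by (simp add: prod.distrib exp_sum sum_distrib_left)
    finally have eq: "(\<Prod>b\<in>Basis. ennreal (exponential_density \<kappa> (d \<bullet> b))) =
       ennreal (\<kappa> ^ CARD('p) * exp (- \<kappa> * (\<Sum>j\<in>UNIV. d $ j)))" .
    have "C * indicator pos_orthant d * exp (- \<kappa> * (\<Sum>j\<in>UNIV. d $ j)) =
          c * (\<kappa> ^ CARD('p) * exp (- \<kappa> * (\<Sum>j\<in>UNIV. d $ j)))"
      using True k by (simp add: c_def)
    moreover have "0 \<le> \<kappa> ^ CARD('p) * exp (- \<kappa> * (\<Sum>j\<in>UNIV. d $ j))" using k by simp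
    ultimately show ?thesis unfolding eq using c0 by (simp add: ennreal_mult[symmetric] mult.assoc)
  next
    case False
    then show ?thesis by simp
  qed
  have meas: "(\<lambda>d::real^'p. \<Prod>b\<in>Basis. ennreal (exponential_density \<kappa> (d \<bullet> b))) \<in> borel_measurable lborel"
    by measurable
  have "(\<integral>\<^sup>+ d. ennreal (C * indicator pos_orthant d * exp (- \<kappa> * (\<Sum>j\<in>UNIV. d $ j))) \<partial>(lborel :: (real^'p) measure))
      \<le> (\<integral>\<^sup>+ d. ennreal c * (\<Prod>b\<in>Basis. ennreal (exponential_density \<kappa> (d \<bullet> b))) \<partial>(lborel :: (real^'p) measure))"
    by (rule nn_integral_mono) (rule pw)
  also have "\<dots> = ennreal c * (\<integral>\<^sup>+ d. (\<Prod>b\<in>Basis. ennreal (exponential_density \<kappa> (d \<bullet> b))) \<partial>(lborel :: (real^'p) measure))"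
    using meas by (rule nn_integral_cmult)
  also have "(\<integral>\<^sup>+ d. (\<Prod>b\<in>Basis. ennreal (exponential_density \<kappa> (d \<bullet> b))) \<partial>(lborel :: (real^'p) measure))
      = (\<Prod>b\<in>(Basis :: (real^'p) set). (\<integral>\<^sup>+ x. ennreal (exponential_density \<kappa> x) \<partial>lborel))"
    by (rule nn_integral_lborel_prod) auto
  also have "(\<integral>\<^sup>+ x. ennreal (exponential_density \<kappa> x) \<partial>lborel) = 1"
  proof -
    interpret p: prob_space "density lborel (exponential_density \<kappa>)"
      by (rule prob_space_exponential_density[OF k])
    have "1 = emeasure (density lborel (exponential_density \<kappa>)) UNIV"
      using p.emeasure_space_1 by simp
    also have "\<dots> = (\<integral>\<^sup>+ x. ennreal (exponential_density \<kappa> x) * indicator UNIV x \<partial>lborel)"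
      by (rule emeasure_density) auto
    finally show ?thesis by simp
  qed
  finally have "(\<integral>\<^sup>+ d. ennreal (C * indicator pos_orthant d * exp (- \<kappa> * (\<Sum>j\<in>UNIV. d $ j))) \<partial>(lborel :: (real^'p) measure)) \<le> ennreal c" by simp
  from le_less_trans[OF this ennreal_less_top[of c]] show ?thesis by simp
qed



lemma gdens_eq: "gdens \<mu> e \<nu> \<Psi> M d V = exp (\<nu> * (\<Sum>j\<in>UNIV. d $ j * acoef \<Psi> M V j)) / (hyp0F1 \<mu> e d powr \<nu>)"
  by (simp add: gdens_def trace_formula)

lemma part_a:
  fixes \<mu>M :: "(real^'p^'n) measure" and \<mu>V :: "(real^'p^'p) measure"
    and e :: "'p \<Rightarrow> 'n" and \<nu> :: real and \<Psi> :: "real^'p^'n"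
  assumes e: "inj e" and hM: "haar_stiefel \<mu>M" and hV: "haar_stiefel \<mu>V"
    and nu: "\<nu> > 0" and s1: "onorm (\<lambda>x. \<Psi> *v x) < 1"
  shows "(\<integral>\<^sup>+ M. \<integral>\<^sup>+ V. \<integral>\<^sup>+ d. indicator pos_orthant d *
               ennreal (gdens \<mu>M e \<nu> \<Psi> M d V) \<partial>lborel \<partial>\<mu>V \<partial>\<mu>M) < \<infinity>"
proof -
  define s where "s = onorm (\<lambda>x. \<Psi> *v x)"
  have s0: "0 \<le> s" unfolding s_def by (rule onorm_pos_le) simp
  define \<epsilon> where "\<epsilon> = (1 - s) / 2"
  have eps: "0 < \<epsilon>" using s1 by (simp add: \<epsilon>_def s_def)
  define m where "m = measure \<mu>M (Ueps e \<epsilon>)"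
  have m0: "0 < m" unfolding m_def by (rule measure_Ueps_pos[OF hM e eps])
  define \<kappa> where "\<kappa> = \<nu> * \<epsilon>"
  have k0: "0 < \<kappa>" using nu eps by (simp add: \<kappa>_def)
  define C where "C = m powr (- \<nu>)"
  have C0: "0 \<le> C" by (simp add: C_def)
  have pw: "indicator pos_orthant d * ennreal (gdens \<mu>M e \<nu> \<Psi> M d V)
       \<le> ennreal (C * indicator pos_orthant d * exp (- \<kappa> * (\<Sum>j\<in>UNIV. d $ j)))"
    if M: "M \<in> stiefel" and V: "V \<in> stiefel" for M d V
  proof (cases "d \<in> pos_orthant")
    case True
    then have dpos: "0 \<le> d $ j" for j by (auto simp: pos_orthant_def less_imp_le)
    define S where "S = (\<Sum>j\<in>UNIV. d $ j)"
    have tr: "(\<Sum>j\<in>UNIV. d $ j * acoef \<Psi> M V j) \<le> s * S"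
      unfolding S_def sum_distrib_left
    proof (intro sum_mono)
      fix j
      have "acoef \<Psi> M V j \<le> s" using acoef_bound[OF M V, of \<Psi> j] by (simp add: s_def)
      from mult_left_mono[OF this dpos[of j]] show "d $ j * acoef \<Psi> M V j \<le> s * d $ j"
        by (simp add: mult.commute)
    qed
    have num: "exp (\<nu> * (\<Sum>j\<in>UNIV. d $ j * acoef \<Psi> M V j)) \<le> exp (\<nu> * (s * S))"
      using tr nu by simp
    have hg: "exp ((1 - \<epsilon>) * S) * m \<le> hyp0F1 \<mu>M e d"
      using hyp_ge[OF hM, of d \<epsilon> e] dpos by (simp add: m_def S_def)
    have pos1: "0 < exp ((1 - \<epsilon>) * S) * m" using m0 by simp
    have den: "exp ((1 - \<epsilon>) * S * \<nu>) * m powr \<nu> \<le> hyp0F1 \<mu>M e d powr \<nu>"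
    proof -
      have "(exp ((1 - \<epsilon>) * S) * m) powr \<nu> \<le> hyp0F1 \<mu>M e d powr \<nu>"
        using hg pos1 nu by (intro powr_mono2) auto
      then show ?thesis using m0 by (simp add: powr_mult exp_powr_real)
    qed
    have dpos2: "0 < exp ((1 - \<epsilon>) * S * \<nu>) * m powr \<nu>" using m0 by simp
    have "gdens \<mu>M e \<nu> \<Psi> M d V \<le> exp (\<nu> * (s * S)) / (exp ((1 - \<epsilon>) * S * \<nu>) * m powr \<nu>)"
      unfolding gdens_eq by (rule frac_le[OF _ num dpos2 den]) simp
    also have "\<dots> = C * exp (- \<kappa> * S)"
    proof -
      have "exp (\<nu> * (s * S)) = exp ((1 - \<epsilon>) * S * \<nu>) * exp (- \<kappa> * S)"
        by (simp add: exp_add[symmetric] \<kappa>_def \<epsilon>_def algebra_simps)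
      then show ?thesis using m0 by (simp add: C_def powr_minus field_simps)
    qed
    finally have "gdens \<mu>M e \<nu> \<Psi> M d V \<le> C * exp (- \<kappa> * S)" .
    moreover have "0 \<le> gdens \<mu>M e \<nu> \<Psi> M d V" by (simp add: gdens_def)
    ultimately show ?thesis using True by (simp add: S_def)
  next
    case False
    then show ?thesis by simp
  qed
  define K where "K = (\<integral>\<^sup>+ d. ennreal (C * indicator pos_orthant d * exp (- \<kappa> * (\<Sum>j\<in>UNIV. d $ j))) \<partial>(lborel :: (real^'p) measure))"
  have K: "K < \<infinity>" unfolding K_def by (rule exp_int_finite[OF C0 k0])
  interpret pM: prob_space \<mu>M by (rule haar_basic(1)[OF hM])
  interpret pV: prob_space \<mu>V by (rule haar_basic(1)[OF hV])
  have inner: "(\<integral>\<^sup>+ d. indicator pos_orthant d * ennreal (gdens \<mu>M e \<nu> \<Psi> M d V) \<partial>lborel) \<le> K"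
    if "M \<in> stiefel" "V \<in> stiefel" for M V
    unfolding K_def by (rule nn_integral_mono) (rule pw[OF that])
  have mid: "(\<integral>\<^sup>+ V. \<integral>\<^sup>+ d. indicator pos_orthant d * ennreal (gdens \<mu>M e \<nu> \<Psi> M d V) \<partial>lborel \<partial>\<mu>V) \<le> K"
    if M: "M \<in> stiefel" for M
  proof -
    have "(\<integral>\<^sup>+ V. \<integral>\<^sup>+ d. indicator pos_orthant d * ennreal (gdens \<mu>M e \<nu> \<Psi> M d V) \<partial>lborel \<partial>\<mu>V) \<le> (\<integral>\<^sup>+ V. K \<partial>\<mu>V)"
      by (rule nn_integral_mono_AE) (use haar_basic(5)[OF hV] inner[OF M] in \<open>auto elim: eventually_mono\<close>)
    also have "\<dots> = K" by (simp add: pV.emeasure_space_1)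
    finally show ?thesis .
  qed
  have "(\<integral>\<^sup>+ M. \<integral>\<^sup>+ V. \<integral>\<^sup>+ d. indicator pos_orthant d * ennreal (gdens \<mu>M e \<nu> \<Psi> M d V) \<partial>lborel \<partial>\<mu>V \<partial>\<mu>M) \<le> (\<integral>\<^sup>+ M. K \<partial>\<mu>M)"
    by (rule nn_integral_mono_AE) (use haar_basic(5)[OF hM] mid in \<open>auto elim: eventually_mono\<close>)
  also have "\<dots> = K" by (simp add: pM.emeasure_space_1)
  finally show ?thesis using K by (simp add: le_less_trans)
qed



lemma onorm_gt1_vec:
  fixes \<Psi> :: "real^'p^'n"
  assumes "onorm (\<lambda>x. \<Psi> *v x) > 1"
  obtains v where "norm v = 1" "norm (\<Psi> *v v) > 1"
proof -
  have "\<exists>x. norm (\<Psi> *v x) > norm x"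
  proof (rule ccontr)
    assume "\<not> ?thesis"
    then have "\<And>x. norm (\<Psi> *v x) \<le> 1 * norm x" by (simp add: not_less)
    then have "onorm (\<lambda>x. \<Psi> *v x) \<le> 1" by (rule onorm_le)
    then show False using assms by simp
  qed
  then obtain x where x: "norm (\<Psi> *v x) > norm x" by blast
  then have x0: "x \<noteq> 0" by auto
  define v where "v = (1 / norm x) *\<^sub>R x"
  have "norm v = 1" using x0 by (simp add: v_def)
  moreover have "norm (\<Psi> *v v) = norm (\<Psi> *v x) / norm x"
    by (simp add: v_def matrix_vector_mult_scaleR)
  moreover have "norm (\<Psi> *v x) / norm x > 1" using x x0 by simp
  ultimately show ?thesis using that by simp
qed

lemma orth_stiefel: "orthogonal_matrix Q \<Longrightarrow> Q \<in> stiefel"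
  by (simp add: stiefel_def orthogonal_matrix_def)

lemma exists_stiefel_col:
  fixes v :: "real^'m"
  assumes "norm v = 1"
  obtains Q :: "real^'m^'m" where "Q \<in> stiefel" "Q *v axis k 1 = v"
proof -
  have n1: "norm (axis k 1 :: real^'m) = 1" by simp
  obtain f :: "real^'m \<Rightarrow> real^'m" where f: "orthogonal_transformation f" "f (axis k 1) = v"
    using orthogonal_transformation_exists_1[OF n1 assms] by metis
  have lf: "linear f" and om: "orthogonal_matrix (matrix f)"
    using f(1) orthogonal_transformation_matrix by auto
  have lf': "Vector_Spaces.linear (*s) (*s) f"
    using lf unfolding linear_def scalar_mult_eq_scaleR .
  have "matrix f *v axis k 1 = f (axis k 1)" by (rule matrix_works[OF lf'])
  then have col: "matrix f *v axis k 1 = v" using f(2) by simp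
  have st: "matrix f \<in> stiefel" using om by (rule orth_stiefel)
  show ?thesis by (rule that[OF st col])
qed

lemma mem_cbox_cart': "x \<in> cbox a b \<longleftrightarrow> (\<forall>i. a $ i \<le> x $ i \<and> x $ i \<le> b $ i)" for x a b :: "real^'k"
  by (simp add: interval_cbox_cart[symmetric] less_eq_vec_def) blast

lemma open_col_ball:
  fixes u :: "real^'n"
  shows "open {M :: real^'p^'n. norm (column j M - u) < \<eta>}"
  unfolding column_def by (intro open_Collect_less continuous_intros)



lemma inner_infinite:
  fixes c :: real and j0 :: "'p::finite"
  assumes c: "0 < c"
    and lb: "\<And>d. (\<forall>j. 0 < d $ j \<and> (j \<noteq> j0 \<longrightarrow> d $ j \<le> 1)) \<Longrightarrow> c \<le> g d"
    and g0: "\<And>d. 0 \<le> g d"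
  shows "(\<integral>\<^sup>+ d. indicator pos_orthant d * ennreal (g d) \<partial>(lborel :: (real^'p) measure)) = \<infinity>"
proof -
  define q :: real where "q = (1/2) ^ card (UNIV - {j0})"
  have q0: "0 < q" by (simp add: q_def)
  have bnd: "ennreal (c * N * q) \<le> (\<integral>\<^sup>+ d. indicator pos_orthant d * ennreal (g d) \<partial>(lborel :: (real^'p) measure))"
    if N: "0 \<le> N" for N :: real
  proof -
    define a :: "real^'p" where "a = (\<chi> j. if j = j0 then 1 else 1/2)"
    define b :: "real^'p" where "b = (\<chi> j. if j = j0 then N + 1 else 1)"
    have ab: "b \<in> cbox a b" using N by (simp add: mem_cbox_cart' a_def b_def)
    have cont: "measure lborel (cbox a b) = N * q"
    proof -
      have "measure lborel (cbox a b) = (\<Prod>i\<in>UNIV. b $ i - a $ i)" using ab by (intro content_cbox_cart) auto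
      also have "\<dots> = (\<Prod>i\<in>UNIV. if i = j0 then N else 1/2)"
      proof (intro prod.cong refl)
        fix i show "b $ i - a $ i = (if i = j0 then N else 1/2)"
          by (cases "i = j0") (simp_all add: a_def b_def)
      qed
      also have "\<dots> = (if j0 = j0 then N else 1/2) * (\<Prod>i\<in>UNIV - {j0}. if i = j0 then N else 1/2)"
        by (rule prod.remove) auto
      also have "(\<Prod>i\<in>UNIV - {j0}. if i = j0 then N else 1/2) = (\<Prod>i\<in>UNIV - {j0}. (1/2::real))"
        by (rule prod.cong) auto
      also have "(if j0 = j0 then N else 1/2) = N" by simp
      also have "(\<Prod>i\<in>UNIV - {j0}. (1/2::real)) = q" by (simp only: q_def prod_constant)
      finally show ?thesis .
    qed
    have em: "emeasure lborel (cbox a b) = ennreal (N * q)"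
      using emeasure_lborel_cbox_finite[of a b] cont
      by (simp add: emeasure_eq_ennreal_measure)
    have "ennreal (c * N * q) = ennreal c * emeasure lborel (cbox a b)"
      using em c N q0 by (simp add: ennreal_mult[symmetric] mult.assoc)
    also have "\<dots> = (\<integral>\<^sup>+ d. ennreal c * indicator (cbox a b) d \<partial>(lborel :: (real^'p) measure))"
      by (rule nn_integral_cmult_indicator[symmetric]) simp
    also have "\<dots> \<le> (\<integral>\<^sup>+ d. indicator pos_orthant d * ennreal (g d) \<partial>(lborel :: (real^'p) measure))"
    proof (rule nn_integral_mono)
      fix d :: "real^'p"
      show "ennreal c * indicator (cbox a b) d \<le> indicator pos_orthant d * ennreal (g d)"
      proof (cases "d \<in> cbox a b")
        case True
        then have dd: "a $ j \<le> d $ j \<and> d $ j \<le> b $ j" for j by (simp add: mem_cbox_cart')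
        have "0 < d $ j \<and> (j \<noteq> j0 \<longrightarrow> d $ j \<le> 1)" for j
          using dd[of j] by (auto simp: a_def b_def split: if_splits)
        then have "c \<le> g d" "d \<in> pos_orthant" using lb by (auto simp: pos_orthant_def)
        then show ?thesis using True by (simp add: ennreal_leI)
      next
        case False
        then show ?thesis by simp
      qed
    qed
    finally show ?thesis .
  qed
  show ?thesis
  proof (rule ccontr)
    assume ne: "\<not> ?thesis"
    define I where "I = (\<integral>\<^sup>+ d. indicator pos_orthant d * ennreal (g d) \<partial>(lborel :: (real^'p) measure))"
    have "I \<noteq> \<top>" using ne by (simp add: I_def)
    then obtain r where r: "I = ennreal r" "0 \<le> r" by (cases I) auto
    define N where "N = (r + 1) / (c * q)"
    have N0: "0 \<le> N" using r c q0 by (simp add: N_def)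
    have "c * N * q = r + 1" using c q0 by (simp add: N_def field_simps)
    then have "ennreal (r + 1) \<le> ennreal r" using bnd[OF N0] r by (simp add: I_def)
    then show False using r by (simp add: ennreal_le_iff)
  qed
qed



lemma part_b:
  fixes \<mu>M :: "(real^'p^'n) measure" and \<mu>V :: "(real^'p^'p) measure"
    and e :: "'p \<Rightarrow> 'n" and \<nu> :: real and \<Psi> :: "real^'p^'n"
  assumes e: "inj e" and hM: "haar_stiefel \<mu>M" and hV: "haar_stiefel \<mu>V"
    and nu: "\<nu> > 0" and s1: "onorm (\<lambda>x. \<Psi> *v x) > 1"
  shows "(\<integral>\<^sup>+ M. \<integral>\<^sup>+ V. \<integral>\<^sup>+ d. indicator pos_orthant d *
               ennreal (gdens \<mu>M e \<nu> \<Psi> M d V) \<partial>lborel \<partial>\<mu>V \<partial>\<mu>M) = \<infinity>"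
proof -
  define s where "s = onorm (\<lambda>x. \<Psi> *v x)"
  have s1': "1 < s" using s1 by (simp add: s_def)
  have onb: "norm (\<Psi> *v x) \<le> s * norm x" for x unfolding s_def by (rule onorm) simp
  obtain v where v: "norm v = 1" "norm (\<Psi> *v v) > 1" using onorm_gt1_vec[OF s1] by blast
  define \<sigma> where "\<sigma> = norm (\<Psi> *v v)"
  have sig: "1 < \<sigma>" using v by (simp add: \<sigma>_def)
  define u where "u = (1 / \<sigma>) *\<^sub>R (\<Psi> *v v)"
  have nz: "\<Psi> *v v \<noteq> 0" using v(2) by auto
  have nu1: "norm u = 1" using sig nz by (simp add: u_def \<sigma>_def)
  have usig: "u \<bullet> (\<Psi> *v v) = \<sigma>"
    using sig by (simp add: u_def \<sigma>_def dot_square_norm power2_eq_square)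
  obtain j0 :: 'p where True by simp
  obtain V0 :: "real^'p^'p" where V0: "V0 \<in> stiefel" "V0 *v axis j0 1 = v"
    using exists_stiefel_col[OF v(1)] by blast
  have cV0: "column j0 V0 = v" using V0(2) by (simp add: matrix_vector_mult_basis)
  obtain Q :: "real^'n^'n" where Q: "Q \<in> stiefel" "Q *v axis (e j0) 1 = u"
    using exists_stiefel_col[OF nu1] by blast
  define M0 where "M0 = Q ** Emat e"
  have M0: "M0 \<in> stiefel" unfolding M0_def by (rule stiefel_mult[OF Q(1) Emat_stiefel[OF e]])
  have cM0: "column j0 M0 = u" unfolding M0_def column_mult column_Emat using Q(2) .
  define \<eta> where "\<eta> = (\<sigma> - 1) / (2 * s)"
  have eta: "0 < \<eta>" using sig s1' by (simp add: \<eta>_def)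
  define U where "U = {M :: real^'p^'n. norm (column j0 M - u) < \<eta>}"
  define W where "W = {V :: real^'p^'p. norm (column j0 V - v) < \<eta>}"
  have oU: "open U" unfolding U_def by (rule open_col_ball)
  have oW: "open W" unfolding W_def by (rule open_col_ball)
  have pU: "0 < emeasure \<mu>M U" using haar_support[OF hM M0 oU] cM0 eta by (simp add: U_def)
  have pW: "0 < emeasure \<mu>V W" using haar_support[OF hV V0(1) oW] cV0 eta by (simp add: W_def)
  have a1: "1 \<le> acoef \<Psi> M V j0"
    if M: "M \<in> stiefel" "M \<in> U" and V: "V \<in> stiefel" "V \<in> W" for M V
  proof -
    define m where "m = column j0 M"
    define w where "w = column j0 V"
    have nw: "norm w = 1" unfolding w_def by (rule stiefel_col_norm[OF V(1)])
    have mu: "norm (m - u) < \<eta>" using M(2) by (simp add: U_def m_def)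
    have wv: "norm (w - v) < \<eta>" using V(2) by (simp add: W_def w_def)
    have split: "acoef \<Psi> M V j0 - \<sigma> = (m - u) \<bullet> (\<Psi> *v w) + u \<bullet> (\<Psi> *v (w - v))"
      using usig by (simp add: acoef_def m_def w_def inner_diff_left inner_diff_right matrix_vector_mult_diff_distrib)
    have t1: "\<bar>(m - u) \<bullet> (\<Psi> *v w)\<bar> \<le> \<eta> * s"
    proof -
      have "\<bar>(m - u) \<bullet> (\<Psi> *v w)\<bar> \<le> norm (m - u) * norm (\<Psi> *v w)" by (rule Cauchy_Schwarz_ineq2)
      also have "\<dots> \<le> \<eta> * s"
        using onb[of w] nw mu s1' eta by (intro mult_mono) auto
      finally show ?thesis .
    qed
    have t2: "\<bar>u \<bullet> (\<Psi> *v (w - v))\<bar> \<le> s * \<eta>"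
    proof -
      have "\<bar>u \<bullet> (\<Psi> *v (w - v))\<bar> \<le> norm u * norm (\<Psi> *v (w - v))" by (rule Cauchy_Schwarz_ineq2)
      also have "\<dots> \<le> s * norm (w - v)" using nu1 onb[of "w - v"] by simp
      also have "\<dots> \<le> s * \<eta>" using wv s1' by (intro mult_left_mono) auto
      finally show ?thesis .
    qed
    have e2: "\<eta> * s + s * \<eta> = \<sigma> - 1" using s1' by (simp add: \<eta>_def field_simps)
    have l1: "- (\<eta> * s) \<le> (m - u) \<bullet> (\<Psi> *v w)" using t1 by (simp add: abs_le_iff)
    have l2: "- (s * \<eta>) \<le> u \<bullet> (\<Psi> *v (w - v))" using t2 by (simp add: abs_le_iff)
    show ?thesis using split l1 l2 e2 by linarith
  qed
  define c where "c = exp (\<nu> * (- (s + 1) * real CARD('p)))"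
  have c0: "0 < c" by (simp add: c_def)
  have inner: "(\<integral>\<^sup>+ d. indicator pos_orthant d * ennreal (gdens \<mu>M e \<nu> \<Psi> M d V) \<partial>lborel) = \<infinity>"
    if M: "M \<in> stiefel" "M \<in> U" and V: "V \<in> stiefel" "V \<in> W" for M V
  proof (rule inner_infinite[OF c0, of j0])
    show "0 \<le> gdens \<mu>M e \<nu> \<Psi> M d V" for d by (simp add: gdens_def)
    fix d :: "real^'p"
    assume dd: "\<forall>j. 0 < d $ j \<and> (j \<noteq> j0 \<longrightarrow> d $ j \<le> 1)"
    define S where "S = (\<Sum>j\<in>UNIV. d $ j)"
    define T where "T = (\<Sum>j\<in>UNIV. d $ j * acoef \<Psi> M V j)"
    have dge: "\<forall>j. 0 \<le> d $ j" using dd by (auto simp: less_imp_le)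
    have hp: "0 < hyp0F1 \<mu>M e d" by (rule hyp_pos[OF hM])
    have hl: "hyp0F1 \<mu>M e d \<le> exp S" using hyp_le[OF hM dge] by (simp add: S_def)
    have hpw: "hyp0F1 \<mu>M e d powr \<nu> \<le> exp (S * \<nu>)"
    proof -
      have "hyp0F1 \<mu>M e d powr \<nu> \<le> exp S powr \<nu>" using hp hl nu by (intro powr_mono2) auto
      then show ?thesis by (simp add: exp_powr_real)
    qed
    have hpp: "0 < hyp0F1 \<mu>M e d powr \<nu>" using hp by simp
    have TS: "- (s + 1) * real CARD('p) \<le> T - S"
    proof -
      have "T - S = (\<Sum>j\<in>UNIV. d $ j * (acoef \<Psi> M V j - 1))"
        by (simp add: T_def S_def sum_subtractf[symmetric] algebra_simps)
      moreover have "(\<Sum>j\<in>(UNIV::'p set). - (s + 1)) \<le> (\<Sum>j\<in>UNIV. d $ j * (acoef \<Psi> M V j - 1))"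
      proof (intro sum_mono)
        fix j
        show "- (s + 1) \<le> d $ j * (acoef \<Psi> M V j - 1)"
        proof (cases "j = j0")
          case True
          then have "0 \<le> acoef \<Psi> M V j - 1" using a1[OF M V] by simp
          then have "0 \<le> d $ j * (acoef \<Psi> M V j - 1)" using dge by simp
          then show ?thesis using s1' by simp
        next
          case False
          then have d1: "d $ j \<le> 1" "0 \<le> d $ j" using dd dge by auto
          have ab: "- s \<le> acoef \<Psi> M V j" using acoef_bound[OF M(1) V(1), of \<Psi> j] by (simp add: s_def)
          have "d $ j * (- (s + 1)) \<le> d $ j * (acoef \<Psi> M V j - 1)"
            using ab d1 by (intro mult_left_mono) auto
          moreover have "- (s + 1) \<le> d $ j * (- (s + 1))"
            using d1 s1' by (simp add: mult_le_cancel_right1)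
          ultimately show ?thesis by linarith
        qed
      qed
      ultimately show ?thesis by (simp add: mult.commute)
    qed
    have "c \<le> exp (\<nu> * (T - S))" unfolding c_def using TS nu by simp
    also have "\<dots> = exp (\<nu> * T) / exp (S * \<nu>)" by (simp add: exp_diff algebra_simps)
    also have "\<dots> \<le> exp (\<nu> * T) / hyp0F1 \<mu>M e d powr \<nu>"
      using hpw hpp by (intro divide_left_mono) auto
    also have "\<dots> = gdens \<mu>M e \<nu> \<Psi> M d V" by (simp add: gdens_eq T_def)
    finally show "c \<le> gdens \<mu>M e \<nu> \<Psi> M d V" .
  qed
  have sU: "U \<in> sets \<mu>M" by (rule haar_open_sets[OF hM oU])
  have sW: "W \<in> sets \<mu>V" by (rule haar_open_sets[OF hV oW])
  have mid: "(\<integral>\<^sup>+ V. \<integral>\<^sup>+ d. indicator pos_orthant d * ennreal (gdens \<mu>M e \<nu> \<Psi> M d V) \<partial>lborel \<partial>\<mu>V) = \<infinity>"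
    if M: "M \<in> stiefel" "M \<in> U" for M
  proof -
    have "\<top> * emeasure \<mu>V W = (\<integral>\<^sup>+ V. \<top> * indicator W V \<partial>\<mu>V)"
      by (rule nn_integral_cmult_indicator[symmetric, OF sW])
    also have "\<dots> \<le> (\<integral>\<^sup>+ V. \<integral>\<^sup>+ d. indicator pos_orthant d * ennreal (gdens \<mu>M e \<nu> \<Psi> M d V) \<partial>lborel \<partial>\<mu>V)"
    proof (rule nn_integral_mono_AE)
      show "AE V in \<mu>V. \<top> * indicator W V \<le> (\<integral>\<^sup>+ d. indicator pos_orthant d * ennreal (gdens \<mu>M e \<nu> \<Psi> M d V) \<partial>lborel)"
        using haar_basic(5)[OF hV]
      proof (rule eventually_mono)
        fix V :: "real^'p^'p" assume V: "V \<in> stiefel"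
        show "\<top> * indicator W V \<le> (\<integral>\<^sup>+ d. indicator pos_orthant d * ennreal (gdens \<mu>M e \<nu> \<Psi> M d V) \<partial>lborel)"
        proof (cases "V \<in> W")
          case True
          then show ?thesis using inner[OF M V True] by simp
        next
          case False
          then show ?thesis by simp
        qed
      qed
    qed
    finally show ?thesis using pW by (simp add: top_unique)
  qed
  have "\<top> * emeasure \<mu>M U = (\<integral>\<^sup>+ M. \<top> * indicator U M \<partial>\<mu>M)"
    by (rule nn_integral_cmult_indicator[symmetric, OF sU])
  also have "\<dots> \<le> (\<integral>\<^sup>+ M. \<integral>\<^sup>+ V. \<integral>\<^sup>+ d. indicator pos_orthant d * ennreal (gdens \<mu>M e \<nu> \<Psi> M d V) \<partial>lborel \<partial>\<mu>V \<partial>\<mu>M)"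
  proof (rule nn_integral_mono_AE)
    show "AE M in \<mu>M. \<top> * indicator U M \<le> (\<integral>\<^sup>+ V. \<integral>\<^sup>+ d. indicator pos_orthant d * ennreal (gdens \<mu>M e \<nu> \<Psi> M d V) \<partial>lborel \<partial>\<mu>V)"
      using haar_basic(5)[OF hM]
    proof (rule eventually_mono)
      fix M :: "real^'p^'n" assume M: "M \<in> stiefel"
      show "\<top> * indicator U M \<le> (\<integral>\<^sup>+ V. \<integral>\<^sup>+ d. indicator pos_orthant d * ennreal (gdens \<mu>M e \<nu> \<Psi> M d V) \<partial>lborel \<partial>\<mu>V)"
      proof (cases "M \<in> U")
        case True
        then show ?thesis using mid[OF M True] by simp
      next
        case False
        then show ?thesis by simp
      qed
    qed
  qed
  finally show ?thesis using pU by (simp add: top_unique)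
qed


theorem theorem1:
  fixes \<mu>M :: "(real^'p^'n) measure" and \<mu>V :: "(real^'p^'p) measure"
    and e :: "'p \<Rightarrow> 'n" and \<nu> :: real and \<Psi> :: "real^'p^'n"
  assumes "inj e"
    and "haar_stiefel \<mu>M" and "haar_stiefel \<mu>V"
    and "\<nu> > 0"
  shows "(onorm (\<lambda>x. \<Psi> *v x) < 1 \<longrightarrow>
           (\<integral>\<^sup>+ M. \<integral>\<^sup>+ V. \<integral>\<^sup>+ d. indicator pos_orthant d *
               ennreal (gdens \<mu>M e \<nu> \<Psi> M d V) \<partial>lborel \<partial>\<mu>V \<partial>\<mu>M) < \<infinity>)
       \<and> (onorm (\<lambda>x. \<Psi> *v x) > 1 \<longrightarrow>
           (\<integral>\<^sup>+ M. \<integral>\<^sup>+ V. \<integral>\<^sup>+ d. indicator pos_orthant d *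
               ennreal (gdens \<mu>M e \<nu> \<Psi> M d V) \<partial>lborel \<partial>\<mu>V \<partial>\<mu>M) = \<infinity>)"
  using part_a[OF assms] part_b[OF assms] by blast

end
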